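(* Fix an integer $k\ge3$. Let $\beta\in\mathbb C$ satisfy $\beta^{k+1}=\big(1-(\tfrac12)^{1/k}e^{\pi i/k}\big)^{-1}$, let $\alpha=-\beta^{-k}$, and let $p(z)=\frac{(z-\alpha)(z+\beta)^k-1}{z}$ (a polynomial of degree $k$). Then there is $N\in\mathbb N$ such that for every integer $n>N$ and every solution $w\in\mathbb D$ of the equation $$z^2p'(z)=\frac{n+2}{n+1},$$ setting $\lambda=\frac1w+p(w)$, the polynomial $1+z[p(z)-\lambda]$ has at least two zeros (counted with multiplicity) in the open unit disk $\mathbb D$.
   Context: $\mathbb D$ denotes the open unit disk in $\mathbb C$. *)

theory Defs
  imports "HOL-Analysis.Analysis" "HOL-Computational_Algebra.Polynomial"
begin

text \<open>The polynomial p(z) = ((z - alpha)(z + beta)^k - 1)/z, realised as exact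
  polynomial division by the monomial z (the numerator has zero constant term
  when alpha = -beta^(-k)).\<close>
definition paper_p :: "complex \<Rightarrow> complex \<Rightarrow> nat \<Rightarrow> complex poly" where
  "paper_p \<alpha> \<beta> k = ([:-\<alpha>, 1:] * [:\<beta>, 1:] ^ k - 1) div [:0, 1:]"

definition zeros_in_disk :: "complex poly \<Rightarrow> nat" where
  "zeros_in_disk q = (\<Sum>a\<in>{a. poly q a = 0 \<and> norm a < 1}. order a q)"

end

theory Submission imports Defs "HOL-Computational_Algebra.Fundamental_Theorem_Algebra" begin

lemma min_prod_le:
  fixes f :: "nat \<Rightarrow> real"
  assumes "m > 0" "\<And>i. f i \<ge> 0"
  shows "\<exists>i<m. f i ^ m \<le> (\<Prod>i<m. f i)"
proof -
  obtain i0 where i0: "i0 \<in> {..<m}" "\<forall>j\<in>{..<m}. f i0 \<le> f j"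
    using ex_min_if_finite[of "f ` {..<m}"] assms(1)
    by (metis arg_min_if_finite(1) arg_min_if_finite(2) empty_iff finite_lessThan lessThan_iff not_less)
  have "(\<Prod>i<m. f i0) \<le> (\<Prod>i<m. f i)"
    by (rule prod_mono) (use i0 assms(2) in auto)
  then show ?thesis using i0 by auto
qed

lemma near_root:
  fixes s :: "complex poly" and w :: complex
  assumes "degree s = k" "k > 0" "lead_coeff s = 1"
  shows "\<exists>a. poly s a = 0 \<and> norm (w - a) ^ k \<le> norm (poly s w)"
proof -
  obtain root where r: "smult (lead_coeff s) (\<Prod>i<degree s. [:-root i, 1:]) = s"
    using complex_poly_decompose' by blast
  hence s: "s = (\<Prod>i<k. [:-root i, 1:])" using assms by simp
  have pw: "poly s w = (\<Prod>i<k. w - root i)" by (simp add: s poly_prod)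
  obtain i where i: "i < k" "norm (w - root i) ^ k \<le> (\<Prod>i<k. norm (w - root i))"
    using min_prod_le[of k "\<lambda>i. norm (w - root i)"] assms by auto
  have "poly s (root i) = 0" using i(1) by (simp add: s poly_prod prod_zero_iff) blast
  moreover have "norm (poly s w) = (\<Prod>i<k. norm (w - root i))" by (simp add: pw prod_norm)
  ultimately show ?thesis using i by metis
qed

lemma beta_gt1:
  fixes k :: nat and \<beta> :: complex
  assumes "k \<ge> 3"
    and "\<beta> ^ (k + 1) = inverse (1 - complex_of_real (root k (1/2)) * exp (of_real pi * \<i> / of_nat k))"
  shows "norm \<beta> > 1"
proof -
  define r where "r = root k (1/2)"
  define \<theta> where "\<theta> = pi / real k"
  have r: "0 < r" "r < 1" using assms(1) by (auto simp: r_def real_root_lt_1_iff)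
  have th: "0 \<le> \<theta>" "\<theta> \<le> pi/3" using assms(1) by (auto simp: \<theta>_def field_simps)
  have "cos (pi/3) \<le> cos \<theta>" using th by (intro cos_monotone_0_pi_le) auto
  hence c: "cos \<theta> \<ge> 1/2" by (simp add: cos_60)
  have e: "exp (of_real pi * \<i> / of_nat k) = cis \<theta>"
    by (simp add: cis_conv_exp \<theta>_def mult.commute)
  define z where "z = 1 - complex_of_real r * cis \<theta>"
  have "(norm z)^2 = (1 - r * cos \<theta>)^2 + (r * sin \<theta>)^2"
    by (simp add: z_def cmod_power2 cis.ctr)
  also have "\<dots> = 1 - 2 * r * cos \<theta> + r^2"
    by (simp add: power_mult_distrib sin_squared_eq power2_diff algebra_simps)
  also have "\<dots> < 1" using r c by (simp add: power2_eq_square)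
  finally have "(norm z)^2 < 1^2" by simp
  hence nz1: "norm z < 1" by (rule power_less_imp_less_base) simp
  have nz0: "z \<noteq> 0"
  proof
    assume "z = 0"
    hence "norm (complex_of_real r * cis \<theta>) = norm (1::complex)" by (simp add: z_def)
    thus False using r by (simp add: norm_mult)
  qed
  have "\<beta> ^ (k+1) = inverse z" using assms(2) by (simp add: e z_def r_def)
  hence "norm (\<beta> ^ (k+1)) = norm (inverse z)" by simp
  hence "norm \<beta> ^ (k+1) = inverse (norm z)" by (simp only: norm_power norm_inverse)
  also have "\<dots> > 1" using nz1 nz0 by (simp add: one_less_inverse)
  finally have "norm \<beta> ^ (k+1) > 1 ^ (k+1)" by simp
  thus ?thesis by (rule power_less_imp_less_base) simp
qed

lemma tri1: fixes x y z :: complex shows "norm (x - y + z) \<ge> norm x - norm y - norm z"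
proof -
  have "norm x \<le> norm (x - y + z) + norm (y - z)" using norm_triangle_ineq[of "x-y+z" "y-z"] by simp
  moreover have "norm (y - z) \<le> norm y + norm z" by (rule norm_triangle_ineq4)
  ultimately show ?thesis by linarith
qed

lemma tri2: fixes x y z :: complex shows "norm (x - y + z) \<ge> norm z - norm x - norm y"
proof -
  have "norm z \<le> norm (x - y + z) + norm (y - x)" using norm_triangle_ineq[of "x-y+z" "y-x"] by simp
  moreover have "norm (y - x) \<le> norm y + norm x" by (rule norm_triangle_ineq4)
  ultimately show ?thesis by linarith
qed

theorem lemma4p4:
  fixes k :: nat and \<beta> :: complex
  assumes "k \<ge> 3"
    and "\<beta> ^ (k + 1) = inverse (1 - complex_of_real (root k (1/2)) * exp (of_real pi * \<i> / of_nat k))"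
  shows "\<exists>N::nat. \<forall>n::nat. n > N \<longrightarrow>
     (\<forall>w::complex. norm w < 1 \<and>
        w ^ 2 * poly (pderiv (paper_p (- inverse (\<beta> ^ k)) \<beta> k)) w = of_nat (n + 2) / of_nat (n + 1)
      \<longrightarrow> (let p = paper_p (- inverse (\<beta> ^ k)) \<beta> k;
               lam = 1 / w + poly p w
           in zeros_in_disk (1 + [:0, 1:] * (p - [:lam:])) \<ge> 2))"
proof -
  have Bgt: "norm \<beta> > 1" by (rule beta_gt1[OF assms])
  hence bnz: "\<beta> \<noteq> 0" by auto
  define \<alpha> where "\<alpha> = - inverse (\<beta> ^ k)"
  define P where "P = paper_p \<alpha> \<beta> k"
  define num where "num = [:-\<alpha>, 1:] * [:\<beta>, 1:] ^ k"
  obtain m where km: "k = Suc m" using assms(1) by (cases k) auto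
  have m2: "m \<ge> 2" using assms(1) km by simp
  have "poly (num - 1) 0 = 0" using bnz by (simp add: num_def \<alpha>_def)
  hence "[:0, 1:] dvd (num - 1)" using poly_eq_0_iff_dvd[of "num - 1" 0] by simp
  moreover have "P = (num - 1) div [:0, 1:]" by (simp only: P_def paper_p_def num_def)
  ultimately have xP: "[:0, 1:] * P = num - 1" by (simp only: dvd_mult_div_cancel)
  have "degree num = degree [:-\<alpha>, 1:] + degree ([:\<beta>, 1:] ^ k)"
    unfolding num_def by (rule degree_mult_eq) auto
  hence deg_num: "degree num = k + 1" by (simp add: degree_linear_power)
  have "lead_coeff num = lead_coeff [:-\<alpha>, 1:] * lead_coeff ([:\<beta>, 1:] ^ k)"
    unfolding num_def by (rule lead_coeff_mult)
  hence lc_num: "lead_coeff num = 1" by (simp add: lead_coeff_power)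
  have pnum: "poly num z = (z - \<alpha>) * (z + \<beta>) ^ k" for z by (simp add: num_def algebra_simps)
  have pdnum: "poly (pderiv num) z = (z + \<beta>) ^ k + (z - \<alpha>) * (of_nat k * (z + \<beta>) ^ m)" for z
  proof -
    have d1: "pderiv [:c, 1:] = (1 :: complex poly)" for c by (simp add: pderiv_pCons)
    have "pderiv num = [:-\<alpha>, 1:] * pderiv ([:\<beta>, 1:] ^ k) + [:\<beta>, 1:] ^ k * pderiv [:-\<alpha>, 1:]"
      unfolding num_def by (rule pderiv_mult)
    also have "\<dots> = [:-\<alpha>, 1:] * smult (of_nat k) ([:\<beta>, 1:] ^ m) + [:\<beta>, 1:] ^ k"
      unfolding km pderiv_power_Suc d1 by simp
    finally show ?thesis by (simp add: algebra_simps km)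
  qed
  have pdxP: "poly P z + z * poly (pderiv P) z = poly (pderiv num) z" for z
  proof -
    have "pderiv ([:0, 1:] * P) = pderiv (num - 1)" by (simp only: xP)
    moreover have "pderiv ([:0, 1:] * P) = [:0, 1:] * pderiv P + P * pderiv [:0, 1:]" by (rule pderiv_mult)
    moreover have "pderiv [:0, 1:] = (1 :: complex poly)" by (simp add: pderiv_pCons)
    moreover have "pderiv (num - 1) = pderiv num" by (simp add: pderiv_diff)
    ultimately have "[:0, 1:] * pderiv P + P = pderiv num" by simp
    hence "poly ([:0, 1:] * pderiv P + P) z = poly (pderiv num) z" by simp
    thus ?thesis by (simp add: algebra_simps)
  qed
  have pxP: "z * poly P z = poly num z - 1" for z
    using arg_cong[OF xP, of "\<lambda>q. poly q z"] by simp
  define B where "B = norm \<beta>"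
  define A where "A = inverse (B ^ k)"
  define d where "d = B - 1"
  define b0 where "b0 = real m * A"
  define c0 where "c0 = A * B"
  have nA: "norm \<alpha> = A" by (simp add: \<alpha>_def A_def B_def norm_inverse norm_power)
  have d0: "d > 0" using Bgt by (simp add: d_def B_def)
  have Bk: "B ^ k > 1" "B ^ m > 1" using Bgt km m2 unfolding B_def by (intro one_less_power; simp)+
  have A1: "A < 1" using Bk by (simp add: A_def inverse_less_1_iff)
  have A0: "A > 0" using Bk by (simp add: A_def)
  have c01: "c0 < 1"
  proof -
    have "c0 = inverse (B ^ m)" using Bgt bnz by (simp add: c0_def A_def km B_def field_simps)
    thus ?thesis using Bk by (simp add: inverse_less_1_iff)
  qed
  have c00: "c0 > 0" using A0 Bgt unfolding c0_def B_def by (intro mult_pos_pos) auto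
  have b00: "b0 \<ge> 0" using A0 by (simp add: b0_def)
  have "real m * A < real m * 1" by (rule mult_strict_left_mono) (use A1 m2 in auto)
  hence key: "b0 + c0 < real k" using c01 km by (simp add: b0_def)
  define t where "t = sqrt ((real k + b0 + c0) / (2 * real k))"
  define L1 where "L1 = (real k - b0 - c0) / 2"
  have tnn: "0 \<le> (real k + b0 + c0) / (2 * real k)"
    using b00 c00 km by (intro divide_nonneg_pos) auto
  have t2: "t ^ 2 = (real k + b0 + c0) / (2 * real k)" unfolding t_def
    using tnn by (rule real_sqrt_pow2)
  have t0: "t \<ge> 0" unfolding t_def using tnn by simp
  have t1: "t < 1"
  proof -
    have "(real k + b0 + c0) / (2 * real k) < 1" using key km by (subst pos_divide_less_eq) auto
    hence "t ^ 2 < 1 ^ 2" using t2 by simp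
    thus ?thesis by (rule power_less_imp_less_base) simp
  qed
  have L1eq: "real k * t ^ 2 - b0 - c0 = L1"
  proof -
    have kp: "real k > 0" using km by simp
    have "real k * t ^ 2 = real k * ((real k + b0 + c0) / (2 * real k))" by (simp only: t2)
    also have "\<dots> = (real k + b0 + c0) / 2" using kp by (simp add: field_simps)
    finally have "real k * t ^ 2 = (real k + b0 + c0) / 2" .
    thus ?thesis by (simp add: L1_def field_simps)
  qed
  have L10: "L1 > 0" using key by (simp add: L1_def)
  define s0 where "s0 = min 1 (c0 / (2 * (b0 + real k)))"
  have s00: "s0 > 0" using c00 b00 km by (simp add: s0_def)
  have s01: "s0 \<le> 1" by (simp add: s0_def)
  have s0c: "(b0 + real k) * s0 \<le> c0 / 2"
  proof -
    have "s0 \<le> c0 / (2 * (b0 + real k))" by (simp add: s0_def)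
    hence "(b0 + real k) * s0 \<le> (b0 + real k) * (c0 / (2 * (b0 + real k)))"
      using b00 by (intro mult_left_mono) auto
    moreover have "b0 + real k > 0" using b00 km by simp
    hence "(b0 + real k) * (c0 / (2 * (b0 + real k))) = c0 / 2" by (simp add: field_simps)
    ultimately show ?thesis by linarith
  qed
  define \<mu> where "\<mu> = min (d ^ m * L1) (min (d ^ m * c0 / 2) (s0 * (1 - t) ^ k))"
  have \<mu>0: "\<mu> > 0" using d0 L10 c00 s00 t1 by (simp add: \<mu>_def)
  obtain N where N0: "N > 0" and N: "inverse (real N) < \<mu>" using ex_inverse_of_nat_less[OF \<mu>0] by blast
  show ?thesis unfolding \<alpha>_def[symmetric] P_def[symmetric] Let_def
  proof (intro exI allI impI, elim conjE)
    fix n :: nat and w :: complex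
    assume nN: "N < n" and w1: "norm w < 1"
      and weq: "w ^ 2 * poly (pderiv P) w = of_nat (n + 2) / of_nat (n + 1)"
    define \<epsilon> where "\<epsilon> = inverse (real (Suc n))"
    have \<epsilon>0: "\<epsilon> > 0" by (simp add: \<epsilon>_def)
    have \<epsilon>\<mu>: "\<epsilon> < \<mu>"
    proof -
      have "\<epsilon> \<le> inverse (real N)" unfolding \<epsilon>_def using nN N0 by (intro le_imp_inverse_le) auto
      thus ?thesis using N by linarith
    qed
    define e where "e = complex_of_real \<epsilon>"
    have ne: "norm e = \<epsilon>" using \<epsilon>0 by (simp add: e_def)
    have nz: "(1 + of_nat n :: complex) \<noteq> 0" using of_nat_neq_0[of n, where ?'a = complex] by simp
    have "e = 1 / (1 + of_nat n)" by (simp add: e_def \<epsilon>_def divide_inverse)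
    moreover have "(of_nat (n + 2) / of_nat (n + 1) :: complex) = 1 + 1 / (1 + of_nat n)"
      using nz by (simp add: field_simps)
    ultimately have weq2: "w ^ 2 * poly (pderiv P) w = 1 + e" using weq by simp
    have w0: "w \<noteq> 0"
    proof
      assume "w = 0"
      with weq2 have "1 + e = 0" by simp
      hence "norm (1 + e) = 0" by simp
      moreover have "1 + e = complex_of_real (1 + \<epsilon>)" by (simp add: e_def)
      hence "norm (1 + e) = 1 + \<epsilon>" using \<epsilon>0 by (simp only: norm_of_real)
      ultimately show False using \<epsilon>0 by simp
    qed
    define g where "g = of_nat k * w ^ 2 - of_nat m * \<alpha> * w + \<alpha> * \<beta>"
    have eg: "e = (w + \<beta>) ^ m * g"
    proof -
      have h1: "w * poly (pderiv num) w = w * poly P w + w ^ 2 * poly (pderiv P) w"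
        by (metis pdxP distrib_left mult.assoc power2_eq_square)
      have "w * poly (pderiv num) w - poly num w = (poly num w - 1) + (1 + e) - poly num w"
        by (simp only: h1 pxP weq2)
      hence "e = w * poly (pderiv num) w - poly num w" by simp
      also have "\<dots> = (w + \<beta>) ^ m * g"
        by (simp add: pdnum pnum g_def km algebra_simps power2_eq_square)
      finally show ?thesis .
    qed
    have wb: "norm ((w + \<beta>) ^ m) \<ge> d ^ m"
    proof -
      have "norm (w + \<beta>) \<ge> norm \<beta> - norm w" using norm_triangle_ineq2[of \<beta> "-w"] by (simp add: add.commute)
      hence "norm (w + \<beta>) \<ge> d" using w1 by (simp add: d_def B_def)
      thus ?thesis using d0 by (simp add: norm_power power_mono)
    qed
    have ng1: "norm (of_nat k * w ^ 2) = real k * norm w ^ 2" by (simp add: norm_mult norm_power)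
    have ng2: "norm (of_nat m * \<alpha> * w) = b0 * norm w" by (simp add: norm_mult nA b0_def)
    have ng3: "norm (\<alpha> * \<beta>) = c0" by (simp add: norm_mult nA c0_def B_def)
    have eps_ge: "\<epsilon> \<ge> d ^ m * norm g"
    proof -
      have "\<epsilon> = norm ((w + \<beta>) ^ m) * norm g" using eg ne by (simp add: norm_mult)
      thus ?thesis using wb by (simp add: mult_right_mono)
    qed
    have wt: "norm w < t"
    proof (rule ccontr)
      assume "\<not> norm w < t"
      hence tw: "t \<le> norm w" by simp
      have "norm g \<ge> real k * norm w ^ 2 - b0 * norm w - c0"
        using tri1[of "of_nat k * w ^ 2" "of_nat m * \<alpha> * w" "\<alpha> * \<beta>"] ng1 ng2 ng3 unfolding g_def by linarith
      moreover have "real k * norm w ^ 2 \<ge> real k * t ^ 2"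
        using tw t0 by (intro mult_left_mono power_mono) auto
      moreover have "b0 * norm w \<le> b0" using w1 b00 by (simp add: mult_left_le)
      ultimately have "norm g \<ge> L1" using L1eq by linarith
      hence "d ^ m * norm g \<ge> d ^ m * L1" using d0 by (simp add: mult_left_mono)
      hence "\<epsilon> \<ge> \<mu>" using eps_ge by (simp add: \<mu>_def)
      thus False using \<epsilon>\<mu> by simp
    qed
    have ws: "norm w > s0"
    proof (rule ccontr)
      assume "\<not> norm w > s0"
      hence sw: "norm w \<le> s0" by simp
      have "norm g \<ge> c0 - real k * norm w ^ 2 - b0 * norm w"
        using tri2[where x="of_nat k * w ^ 2" and y="of_nat m * \<alpha> * w" and z="\<alpha> * \<beta>"] ng1 ng2 ng3 unfolding g_def by linarith
      moreover have "norm w ^ 2 \<le> norm w" using w1 by (simp add: power2_eq_square mult_left_le_one_le)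
      hence "real k * norm w ^ 2 \<le> real k * norm w" by (simp add: mult_left_mono)
      moreover have "(b0 + real k) * norm w = b0 * norm w + real k * norm w" by (simp add: distrib_right)
      moreover have "(b0 + real k) * norm w \<le> (b0 + real k) * s0" using sw b00 by (simp add: mult_left_mono)
      ultimately have "norm g \<ge> c0 / 2" using s0c by linarith
      hence "d ^ m * norm g \<ge> d ^ m * (c0 / 2)" using d0 by (simp add: mult_left_mono)
      hence "\<epsilon> \<ge> \<mu>" using eps_ge by (simp add: \<mu>_def)
      thus False using \<epsilon>\<mu> by simp
    qed
    define lam where "lam = 1 / w + poly P w"
    define Q where "Q = 1 + [:0, 1:] * (P - [:lam:])"
    have Qnum: "Q = num - [:0, lam:]"
    proof -
      have "Q = 1 + [:0, 1:] * P - [:0, 1:] * [:lam:]" by (simp add: Q_def algebra_simps)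
      moreover have "pCons 0 P = num - 1" using xP by simp
      ultimately show ?thesis by simp
    qed
    have degQ: "degree Q = k + 1"
    proof -
      have "degree (- [:0, lam:]) < degree num" using deg_num km by simp
      hence "degree (num + - [:0, lam:]) = degree num" by (rule degree_add_eq_left)
      moreover have "num + - [:0, lam:] = Q" by (simp only: Qnum diff_conv_add_uminus)
      ultimately show ?thesis using deg_num by simp
    qed
    have lcQ: "lead_coeff Q = 1"
    proof -
      have "coeff [:0, lam:] (k + 1) = 0" using km by (simp add: coeff_pCons split: nat.split)
      thus ?thesis using degQ lc_num deg_num by (simp add: Qnum)
    qed
    have Q0: "Q \<noteq> 0" using lcQ by auto
    have Qw: "poly Q w = 0" using w0 by (simp add: Q_def lam_def field_simps)
    then obtain s where Qs: "Q = [:-w, 1:] * s" using poly_eq_0_iff_dvd by (metis dvdE)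
    have s0nz: "s \<noteq> 0" using Q0 Qs by auto
    have "degree Q = degree [:-w, 1:] + degree s" unfolding Qs by (rule degree_mult_eq) (use s0nz in auto)
    hence degs: "degree s = k" using degQ by simp
    have "lead_coeff Q = lead_coeff [:-w, 1:] * lead_coeff s" unfolding Qs by (rule lead_coeff_mult)
    hence lcs: "lead_coeff s = 1" using lcQ by simp
    have psw: "poly s w = e / w"
    proof -
      have d1: "pderiv [:c, 1:] = (1 :: complex poly)" for c by (simp add: pderiv_pCons)
      have d0: "pderiv [:c:] = (0 :: complex poly)" for c by (simp add: pderiv_pCons)
      have "pderiv Q = [:-w, 1:] * pderiv s + s * pderiv [:-w, 1:]" unfolding Qs by (rule pderiv_mult)
      hence "poly (pderiv Q) w = poly s w" by (simp add: d1)
      moreover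
      have e1: "pderiv Q = pderiv 1 + pderiv ([:0, 1:] * (P - [:lam:]))" unfolding Q_def by (rule pderiv_add)
      have e2: "pderiv ([:0, 1:] * (P - [:lam:])) = [:0, 1:] * pderiv (P - [:lam:]) + (P - [:lam:]) * pderiv [:0, 1:]"
        by (rule pderiv_mult)
      have e3: "pderiv (P - [:lam:]) = pderiv P - pderiv [:lam:]" by (rule pderiv_diff)
      have hQ: "pderiv Q = [:0, 1:] * pderiv P + (P - [:lam:])"
        by (simp only: e1 e2 e3 d0 d1 pderiv_1 diff_zero add_0_left mult_1_right)
      have "poly (pderiv Q) w = w * poly (pderiv P) w + (poly P w - lam)" unfolding hQ by simp
      ultimately have "poly s w = poly P w - lam + w * poly (pderiv P) w" by (simp add: algebra_simps)
      hence "poly s w = w * poly (pderiv P) w - 1 / w" by (simp add: lam_def)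
      also have "\<dots> = (w ^ 2 * poly (pderiv P) w - 1) / w" using w0 by (simp add: field_simps power2_eq_square)
      also have "\<dots> = e / w" by (simp add: weq2)
      finally show ?thesis .
    qed
    have nsw: "norm (poly s w) < (1 - t) ^ k"
    proof -
      have "norm (poly s w) = \<epsilon> / norm w" by (simp add: psw ne norm_divide)
      also have "\<dots> < \<epsilon> / s0" using ws s00 \<epsilon>0 by (intro divide_strict_left_mono mult_pos_pos) auto
      also have "\<dots> < (1 - t) ^ k"
      proof -
        have "\<epsilon> < s0 * (1 - t) ^ k" using \<epsilon>\<mu> by (simp add: \<mu>_def)
        thus ?thesis using s00 by (simp add: field_simps)
      qed
      finally show ?thesis .
    qed
    have kpos: "k > 0" using km by simp
    obtain a where a: "poly s a = 0" "norm (w - a) ^ k \<le> norm (poly s w)"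
      using near_root[OF degs kpos lcs, of w] by blast
    have "norm (w - a) ^ k < (1 - t) ^ k" using a(2) nsw by linarith
    hence wa: "norm (w - a) < 1 - t" by (rule power_less_imp_less_base) (use t1 in simp)
    have "norm a \<le> norm w + norm (w - a)" using norm_triangle_ineq4[of w "w - a"] by simp
    hence a1: "norm a < 1" using wt wa by linarith
    have enz: "e \<noteq> 0" using ne \<epsilon>0 by auto
    have aw: "a \<noteq> w"
    proof
      assume "a = w"
      hence "e / w = 0" using a(1) psw by simp
      thus False using enz w0 by simp
    qed
    have Qa: "poly Q a = 0" using a(1) by (simp add: Qs)
    define S where "S = {x. poly Q x = 0 \<and> norm x < 1}"
    have finS: "finite S" unfolding S_def using poly_roots_finite[OF Q0] by simp
    have sub: "{w, a} \<subseteq> S" using Qw Qa w1 a1 by (auto simp: S_def)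
    have "order w Q + order a Q \<le> (\<Sum>x\<in>S. order x Q)"
      using sum_mono2[OF finS sub, of "\<lambda>x. order x Q"] aw by simp
    moreover have "order w Q \<noteq> 0" using Qw Q0 order_root[of Q w] by simp
    moreover have "order a Q \<noteq> 0" using Qa Q0 order_root[of Q a] by simp
    ultimately have "(\<Sum>x\<in>S. order x Q) \<ge> 2" by linarith
    thus "zeros_in_disk (1 + [:0, 1:] * (P - [:1 / w + poly P w:])) \<ge> 2"
      by (simp add: zeros_in_disk_def S_def Q_def lam_def)
  qed
qed
end
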